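(* Let $G$ be an abelian group and let $M,N$ be two matroids over $G$ of the same rank $n$. Let $\mathcal{M}=\{a_1,\dots,a_n\}$ be a basis of $M$. Assume that for every $J\subseteq[n]$, $$r_N\Big(\bigcap_{i\in J}\big((-a_i+E(M))\cap E(N)\big)\Big)\le n-|J|.$$ Then $\mathcal{M}$ is matched to some basis of $N$.
   Context: A matroid over $G$ is a matroid $M$ whose finite ground set $E(M)$ is a subset of $G$; all matroids are assumed loopless. $r_N$ is the rank function of $N$: $r_N(X)=\max\{|X\cap I|: I \text{ independent in } N\}$. $-a+X=\{-a+x:x\in X\}$. For bases $\mathcal{M}=\{a_1,\dots,a_n\}$ of $M$ and $\mathcal{N}=\{b_1,\dots,b_n\}$ of $N$ (with $r(M)=r(N)=n>0$), $\mathcal{M}$ is matched to $\mathcal{N}$ if there is a permutation $\pi\in S_n$ with $a_i+b_{\pi(i)}\notin E(M)$ for all $i$. *)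

theory Defs
  imports Main
begin

text \<open>A matroid over an abelian group (the ambient type 'a) is given by a finite
ground set and an independence predicate satisfying the usual axioms; all matroids
are assumed loopless.\<close>

record 'a matroid =
  gset :: "'a set"
  indep :: "'a set \<Rightarrow> bool"

definition matroid :: "'a matroid \<Rightarrow> bool" where
  "matroid M \<longleftrightarrow>
     finite (gset M) \<and>
     indep M {} \<and>
     (\<forall>I. indep M I \<longrightarrow> I \<subseteq> gset M) \<and>
     (\<forall>I J. indep M J \<and> I \<subseteq> J \<longrightarrow> indep M I) \<and>
     (\<forall>I J. indep M I \<and> indep M J \<and> card I < card J \<longrightarrow>
        (\<exists>x\<in>J - I. indep M (insert x I)))"

definition loopless :: "'a matroid \<Rightarrow> bool" where
  "loopless M \<longleftrightarrow> (\<forall>x\<in>gset M. indep M {x})"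

definition is_basis :: "'a matroid \<Rightarrow> 'a set \<Rightarrow> bool" where
  "is_basis M B \<longleftrightarrow> indep M B \<and> (\<forall>I. indep M I \<and> B \<subseteq> I \<longrightarrow> I = B)"

definition rank_fn :: "'a matroid \<Rightarrow> 'a set \<Rightarrow> nat" where
  "rank_fn M X = Max {card (X \<inter> I) | I. indep M I}"

definition matroid_rank :: "'a matroid \<Rightarrow> nat" where
  "matroid_rank M = rank_fn M (gset M)"

definition matched_to :: "'a::ab_group_add matroid \<Rightarrow> nat \<Rightarrow> (nat \<Rightarrow> 'a) \<Rightarrow> (nat \<Rightarrow> 'a) \<Rightarrow> bool" where
  "matched_to M n a b \<longleftrightarrow>
     (\<exists>\<pi>. bij_betw \<pi> {..<n} {..<n} \<and> (\<forall>i<n. a i + b (\<pi> i) \<notin> gset M))"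

end

theory Submission
  imports Defs
begin

locale mat =
  fixes M :: "'a matroid"
  assumes mat: "matroid M"
begin

lemma indep_sub: "indep M I \<Longrightarrow> I \<subseteq> gset M"
  using mat unfolding matroid_def by blast

lemma fin_g: "finite (gset M)"
  using mat unfolding matroid_def by blast

lemma indep_fin: "indep M I \<Longrightarrow> finite I"
  using indep_sub fin_g finite_subset by blast

lemma indep_mono: "indep M J \<Longrightarrow> I \<subseteq> J \<Longrightarrow> indep M I"
  using mat unfolding matroid_def by blast

lemma indep_empty: "indep M {}"
  using mat unfolding matroid_def by blast

lemma augment: "indep M I \<Longrightarrow> indep M J \<Longrightarrow> card I < card J \<Longrightarrow> \<exists>x\<in>J - I. indep M (insert x I)"
  using mat unfolding matroid_def by blast

lemma fam_fin: "finite {card (X \<inter> I) | I. indep M I}"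
proof -
  have "{card (X \<inter> I) | I. indep M I} \<subseteq> (\<lambda>I. card (X \<inter> I)) ` Pow (gset M)"
    using indep_sub by blast
  then show ?thesis using fin_g finite_subset by blast
qed

lemma fam_ne: "{card (X \<inter> I) | I. indep M I} \<noteq> {}"
  using indep_empty by blast

lemma rank_ge: "indep M I \<Longrightarrow> card (X \<inter> I) \<le> rank_fn M X"
  unfolding rank_fn_def using fam_fin by (intro Max_ge) auto

lemma rank_le_indep: "indep M I \<Longrightarrow> I \<subseteq> X \<Longrightarrow> card I \<le> rank_fn M X"
  using rank_ge[of I X] by (simp add: Int_absorb1)

lemma rank_ex: "\<exists>I. indep M I \<and> I \<subseteq> X \<and> card I = rank_fn M X"
proof -
  have "rank_fn M X \<in> {card (X \<inter> I) | I. indep M I}"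
    unfolding rank_fn_def using fam_fin fam_ne by (rule Max_in)
  then obtain I where "indep M I" "rank_fn M X = card (X \<inter> I)" by blast
  moreover have "indep M (X \<inter> I)" using \<open>indep M I\<close> by (rule indep_mono) auto
  ultimately show ?thesis by (intro exI[of _ "X \<inter> I"]) auto
qed

lemma rank_le_card: assumes "finite X" shows "rank_fn M X \<le> card X"
proof -
  obtain I where "indep M I" "I \<subseteq> X" "card I = rank_fn M X" using rank_ex by blast
  then show ?thesis using card_mono[OF assms \<open>I \<subseteq> X\<close>] by simp
qed

lemma rank_mono: assumes "X \<subseteq> Y" shows "rank_fn M X \<le> rank_fn M Y"
proof -
  obtain I where "indep M I" "I \<subseteq> X" "card I = rank_fn M X" using rank_ex by blast
  then show ?thesis using rank_le_indep[of I Y] assms by simp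
qed

lemma card_indep_le: "indep M B \<Longrightarrow> card B \<le> card (gset M)"
  using card_mono[OF fin_g indep_sub] .

lemma extend: assumes "indep M I" "I \<subseteq> X"
  shows "\<exists>B. indep M B \<and> I \<subseteq> B \<and> B \<subseteq> X \<and> card B = rank_fn M X"
proof -
  define P where "P k = (\<exists>B. indep M B \<and> I \<subseteq> B \<and> B \<subseteq> X \<and> card B = k)" for k
  have "P (card I)" using assms unfolding P_def by blast
  moreover have "\<forall>y. P y \<longrightarrow> y \<le> card (gset M)"
    unfolding P_def using card_indep_le by blast
  ultimately obtain k where k: "P k" "\<forall>y. P y \<longrightarrow> y \<le> k"
    using Nat.ex_has_greatest_nat[of P "card I" "card (gset M)"] by blast
  then obtain B where B: "indep M B" "I \<subseteq> B" "B \<subseteq> X" "card B = k" unfolding P_def by blast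
  have "card B \<le> rank_fn M X" using B(1,3) by (rule rank_le_indep)
  moreover have "\<not> card B < rank_fn M X"
  proof
    assume a: "card B < rank_fn M X"
    obtain J where J: "indep M J" "J \<subseteq> X" "card J = rank_fn M X" using rank_ex by blast
    have "card B < card J" using a J(3) by simp
    then obtain x where x: "x \<in> J - B" "indep M (insert x B)" using augment[OF B(1) J(1)] by blast
    have "card (insert x B) = Suc k" using x B indep_fin by simp
    moreover have "insert x B \<subseteq> X" using x J(2) B(3) by blast
    ultimately have "P (Suc k)" unfolding P_def using x(2) B(2) by blast
    then have "Suc k \<le> k" using k(2) by blast
    then show False by simp
  qed
  ultimately show ?thesis using B by auto
qed

lemma submod: "rank_fn M (X \<union> Y) + rank_fn M (X \<inter> Y) \<le> rank_fn M X + rank_fn M Y"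
proof -
  obtain B0 where B0: "indep M B0" "B0 \<subseteq> X \<inter> Y" "card B0 = rank_fn M (X \<inter> Y)"
    using rank_ex by blast
  then obtain B where B: "indep M B" "B0 \<subseteq> B" "B \<subseteq> X \<union> Y" "card B = rank_fn M (X \<union> Y)"
    using extend[of B0 "X \<union> Y"] by blast
  have fB: "finite B" using B indep_fin by blast
  have "card (B \<inter> X) + card (B \<inter> Y) = card ((B \<inter> X) \<union> (B \<inter> Y)) + card ((B \<inter> X) \<inter> (B \<inter> Y))"
    using fB by (intro card_Un_Int) auto
  also have "(B \<inter> X) \<union> (B \<inter> Y) = B" using B by auto
  finally have eq: "card (B \<inter> X) + card (B \<inter> Y) = card B + card (B \<inter> X \<inter> Y)"
    by (simp add: Int_assoc Int_left_commute Int_commute)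
  have "card B0 \<le> card (B \<inter> X \<inter> Y)" using B0 B fB by (intro card_mono) auto
  moreover have "card (B \<inter> X) \<le> rank_fn M X" using B indep_mono rank_le_indep by (meson Int_lower1 Int_lower2)
  moreover have "card (B \<inter> Y) \<le> rank_fn M Y" using B indep_mono rank_le_indep by (meson Int_lower1 Int_lower2)
  ultimately show ?thesis using eq B B0 by linarith
qed


lemma rank_empty: "rank_fn M {} = 0"
  using rank_le_card[of "{}"] by simp

lemma rado:
  fixes n :: nat and A :: "nat \<Rightarrow> 'a set"
  assumes "\<forall>i<n. A i \<subseteq> gset M"
    and "\<forall>J \<subseteq> {..<n}. card J \<le> rank_fn M (\<Union>i\<in>J. A i)"
  shows "\<exists>x. inj_on x {..<n} \<and> (\<forall>i<n. x i \<in> A i) \<and> indep M (x ` {..<n})"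
  using assms
proof (induction "\<Sum>i<n. card (A i)" arbitrary: A rule: less_induct)
  case less
  have finA: "\<forall>i<n. finite (A i)" using less.prems(1) fin_g finite_subset by blast
  show ?case
  proof (cases "\<exists>k<n. \<exists>y1 y2. y1 \<in> A k \<and> y2 \<in> A k \<and> y1 \<noteq> y2")
    case True
    then obtain k y1 y2 where k: "k < n" "y1 \<in> A k" "y2 \<in> A k" "y1 \<noteq> y2" by blast
    define A1 where "A1 = A(k := A k - {y1})"
    define A2 where "A2 = A(k := A k - {y2})"
    have key: "(\<forall>J\<subseteq>{..<n}. card J \<le> rank_fn M (\<Union>i\<in>J. A1 i)) \<or>
               (\<forall>J\<subseteq>{..<n}. card J \<le> rank_fn M (\<Union>i\<in>J. A2 i))"
    proof (rule ccontr)
      assume "\<not> ?thesis"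
      then obtain J1 J2 where J1: "J1 \<subseteq> {..<n}" "rank_fn M (\<Union>i\<in>J1. A1 i) < card J1"
        and J2: "J2 \<subseteq> {..<n}" "rank_fn M (\<Union>i\<in>J2. A2 i) < card J2"
        by (meson not_le)
      have k1: "k \<in> J1"
      proof (rule ccontr)
        assume "k \<notin> J1"
        then have "(\<Union>i\<in>J1. A1 i) = (\<Union>i\<in>J1. A i)" unfolding A1_def by auto
        moreover have "card J1 \<le> rank_fn M (\<Union>i\<in>J1. A i)" using J1(1) less.prems(2) by blast
        ultimately show False using J1(2) by simp
      qed
      have k2: "k \<in> J2"
      proof (rule ccontr)
        assume "k \<notin> J2"
        then have "(\<Union>i\<in>J2. A2 i) = (\<Union>i\<in>J2. A i)" unfolding A2_def by auto
        moreover have "card J2 \<le> rank_fn M (\<Union>i\<in>J2. A i)" using J2(1) less.prems(2) by blast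
        ultimately show False using J2(2) by simp
      qed
      define K1 where "K1 = J1 - {k}"
      define K2 where "K2 = J2 - {k}"
      have "finite J1" by (rule finite_subset[OF J1(1)]) simp
      moreover have "finite J2" by (rule finite_subset[OF J2(1)]) simp
      ultimately have fK1: "finite K1" "finite K2" unfolding K1_def K2_def by auto
      have "J1 = insert k K1" "k \<notin> K1" unfolding K1_def using k1 by auto
      then have cJ1: "card J1 = Suc (card K1)" using fK1 by simp
      have "J2 = insert k K2" "k \<notin> K2" unfolding K2_def using k2 by auto
      then have cJ2: "card J2 = Suc (card K2)" using fK1 by simp
      define X where "X = (\<Union>i\<in>K1. A i) \<union> (A k - {y1})"
      define Y where "Y = (\<Union>i\<in>K2. A i) \<union> (A k - {y2})"
      have UX: "(\<Union>i\<in>J1. A1 i) = X" unfolding X_def A1_def K1_def using k1 by auto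
      have UY: "(\<Union>i\<in>J2. A2 i) = Y" unfolding Y_def A2_def K2_def using k2 by auto
      have s1: "(\<Union>i\<in>insert k (K1 \<union> K2). A i) \<subseteq> X \<union> Y"
        unfolding X_def Y_def using k by auto
      have s2: "(\<Union>i\<in>K1 \<inter> K2. A i) \<subseteq> X \<inter> Y"
        unfolding X_def Y_def by auto
      have "insert k (K1 \<union> K2) \<subseteq> {..<n}" using J1 J2 k unfolding K1_def K2_def by auto
      then have "card (insert k (K1 \<union> K2)) \<le> rank_fn M (\<Union>i\<in>insert k (K1 \<union> K2). A i)"
        using less.prems(2) by blast
      then have r1: "card (insert k (K1 \<union> K2)) \<le> rank_fn M (X \<union> Y)"
        using rank_mono[OF s1] by linarith
      have "K1 \<inter> K2 \<subseteq> {..<n}" using J1 J2 unfolding K1_def K2_def by auto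
      then have "card (K1 \<inter> K2) \<le> rank_fn M (\<Union>i\<in>K1 \<inter> K2. A i)"
        using less.prems(2) by blast
      then have r2: "card (K1 \<inter> K2) \<le> rank_fn M (X \<inter> Y)"
        using rank_mono[OF s2] by linarith
      have "k \<notin> K1 \<union> K2" unfolding K1_def K2_def by blast
      moreover have "finite (K1 \<union> K2)" using fK1 by blast
      ultimately have c1: "card (insert k (K1 \<union> K2)) = Suc (card (K1 \<union> K2))"
        by (rule card_insert_disjoint[rotated])
      have c2: "card K1 + card K2 = card (K1 \<union> K2) + card (K1 \<inter> K2)"
        by (rule card_Un_Int[OF fK1])
      have rX: "rank_fn M X < card J1" using J1(2) UX by simp
      have rY: "rank_fn M Y < card J2" using J2(2) UY by simp
      have "rank_fn M (X \<union> Y) + rank_fn M (X \<inter> Y) \<le> rank_fn M X + rank_fn M Y" by (rule submod)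
      then show False using r1 r2 c1 c2 cJ1 cJ2 rX rY by linarith
    qed
    obtain A' where A': "A' = A1 \<or> A' = A2" "\<forall>J\<subseteq>{..<n}. card J \<le> rank_fn M (\<Union>i\<in>J. A' i)"
      using key by blast
    obtain y where y: "A' = A(k := A k - {y})" "y \<in> A k"
    proof (cases "A' = A1")
      case True then show ?thesis using that[of y1] k unfolding A1_def by simp
    next
      case False then have "A' = A2" using A'(1) by simp
      then show ?thesis using that[of y2] k unfolding A2_def by simp
    qed
    have sub: "\<forall>i. A' i \<subseteq> A i" using y by auto
    have lt: "(\<Sum>i<n. card (A' i)) < (\<Sum>i<n. card (A i))"
    proof (rule sum_strict_mono_ex1)
      show "finite {..<n}" by simp
      show "\<forall>i\<in>{..<n}. card (A' i) \<le> card (A i)"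
      proof
        fix i assume "i \<in> {..<n}"
        then have "finite (A i)" using finA by simp
        then show "card (A' i) \<le> card (A i)" using sub card_mono by blast
      qed
      have "finite (A k)" using finA k(1) by simp
      then have "card (A k - {y}) < card (A k)" using y(2) by (rule card_Diff1_less)
      then have "card (A' k) < card (A k)" using y(1) by simp
      then show "\<exists>i\<in>{..<n}. card (A' i) < card (A i)" using k(1) by blast
    qed
    have "\<forall>i<n. A' i \<subseteq> gset M" using sub less.prems(1) by blast
    then obtain x where x: "inj_on x {..<n}" "\<forall>i<n. x i \<in> A' i" "indep M (x ` {..<n})"
      using less.hyps[OF lt _ A'(2)] by blast
    then show ?thesis using sub by blast
  next
    case False
    have ne: "\<forall>i<n. A i \<noteq> {}"
    proof (intro allI impI)
      fix i assume i: "i < n"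
      have "card {i} \<le> rank_fn M (\<Union>j\<in>{i}. A j)" using less.prems(2) i by auto
      then show "A i \<noteq> {}" using rank_empty by auto
    qed
    define x where "x i = (SOME y. y \<in> A i)" for i
    have xA: "\<forall>i<n. A i = {x i}"
    proof (intro allI impI)
      fix i assume i: "i < n"
      have "x i \<in> A i" unfolding x_def using ne i by (simp add: some_in_eq)
      then show "A i = {x i}" using False i by blast
    qed
    define S where "S = x ` {..<n}"
    have US: "(\<Union>i\<in>{..<n}. A i) = S" unfolding S_def using xA by auto
    have "n \<le> rank_fn M S" using less.prems(2) US by (metis card_lessThan order_refl)
    moreover obtain I where I: "indep M I" "I \<subseteq> S" "card I = rank_fn M S" using rank_ex by blast
    moreover have cS: "card S \<le> n" unfolding S_def by (metis card_image_le card_lessThan finite_lessThan)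
    moreover have fS: "finite S" unfolding S_def by simp
    ultimately have "card S \<le> card I" by linarith
    then have "I = S" using card_seteq[OF fS I(2)] by simp
    then have "indep M S" using I by simp
    moreover have "card S = n" using \<open>I = S\<close> I(3) cS \<open>n \<le> rank_fn M S\<close> by simp
    then have "inj_on x {..<n}" unfolding S_def by (intro eq_card_imp_inj_on) auto
    ultimately show ?thesis using xA S_def by auto
  qed
qed
end


theorem proposition3p7:
  fixes M N :: "'a::ab_group_add matroid" and n :: nat and a :: "nat \<Rightarrow> 'a"
  assumes "matroid M" and "loopless M" and "matroid N" and "loopless N"
    and "matroid_rank M = n" and "matroid_rank N = n" and "n > 0"
    and "inj_on a {..<n}" and "is_basis M (a ` {..<n})"
    and "\<forall>J \<subseteq> {..<n}.
          rank_fn N (\<Inter>i\<in>J. ((\<lambda>x. - a i + x) ` gset M) \<inter> gset N) \<le> n - card J"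
  shows "\<exists>b. inj_on b {..<n} \<and> is_basis N (b ` {..<n}) \<and> matched_to M n a b"
proof -
  interpret N: mat N using assms(3) by unfold_locales
  define F where "F i = ((\<lambda>x. - a i + x) ` gset M) \<inter> gset N" for i
  define A where "A i = gset N - F i" for i
  have rN: "rank_fn N (gset N) = n" using assms(6) unfolding matroid_rank_def by simp
  have cond: "\<forall>J \<subseteq> {..<n}. card J \<le> rank_fn N (\<Union>i\<in>J. A i)"
  proof (intro allI impI)
    fix J assume J: "J \<subseteq> {..<n}"
    show "card J \<le> rank_fn N (\<Union>i\<in>J. A i)"
    proof (cases "J = {}")
      case True then show ?thesis by simp
    next
      case False
      define Z where "Z = (\<Inter>i\<in>J. F i)"
      have rZ: "rank_fn N Z \<le> n - card J" using mp[OF spec[OF assms(10), of J] J]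
        by (simp only: Z_def F_def)
      have ZN: "Z \<subseteq> gset N" using False unfolding Z_def F_def by auto
      have UA: "(\<Union>i\<in>J. A i) = gset N - Z" using False unfolding Z_def A_def by auto
      have un: "(gset N - Z) \<union> Z = gset N" using ZN by auto
      have "rank_fn N ((gset N - Z) \<union> Z) + rank_fn N ((gset N - Z) \<inter> Z) \<le> rank_fn N (gset N - Z) + rank_fn N Z"
        by (rule N.submod)
      then have "n \<le> rank_fn N (gset N - Z) + rank_fn N Z" using un rN by simp
      moreover have "card J \<le> n" using J by (metis card_lessThan card_mono finite_lessThan)
      ultimately show ?thesis using rZ UA by simp
    qed
  qed
  have "\<forall>i<n. A i \<subseteq> gset N" unfolding A_def by auto
  then obtain b where b: "inj_on b {..<n}" "\<forall>i<n. b i \<in> A i" "indep N (b ` {..<n})"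
    using N.rado[OF _ cond] by blast
  have cb: "card (b ` {..<n}) = n" using b(1) by (simp add: card_image)
  have basis: "is_basis N (b ` {..<n})"
    unfolding is_basis_def
  proof (intro conjI allI impI)
    show "indep N (b ` {..<n})" by (rule b(3))
    fix I assume I: "indep N I \<and> b ` {..<n} \<subseteq> I"
    have "card I \<le> n" using I N.rank_le_indep[of I "gset N"] N.indep_sub rN by auto
    moreover have "finite I" using I N.indep_fin by blast
    ultimately show "I = b ` {..<n}" using card_seteq[of I "b ` {..<n}"] I cb by simp
  qed
  have "\<forall>i<n. a i + b i \<notin> gset M"
  proof (intro allI impI notI)
    fix i assume i: "i < n" and m: "a i + b i \<in> gset M"
    have "b i = - a i + (a i + b i)" by (simp add: add.assoc[symmetric])
    then have "b i \<in> (\<lambda>x. - a i + x) ` gset M" using m by (rule image_eqI)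
    moreover have "b i \<in> gset N" using b(2) i unfolding A_def by simp
    ultimately have "b i \<in> F i" unfolding F_def by simp
    then show False using b(2) i unfolding A_def by blast
  qed
  then have "matched_to M n a b" unfolding matched_to_def
    by (intro exI[of _ id]) auto
  then show ?thesis using b basis by blast
qed

end
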